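(* For any $q\in\mathbb{N}$, $s\in\mathbb{N}_0$ and $Y_s=\{y_i\}_{i=1}^s$ with $-1<y_s<\dots<y_1<1$, there exist a function $f\in\Delta^{(q)}(Y_s)$ and a set $A_p=\{\alpha_i\}_{i=1}^p$, $-1\le\alpha_p<\dots<\alpha_1\le1$, with $p\ge q+2$ and $A_p\cap Y_s=\emptyset$, such that for every $n\in\mathbb{N}_0$ there is no algebraic polynomial $P$ of degree $\le n$ with $P\in\Delta^{(q)}(Y_s)$ and $P(\alpha)=f(\alpha)$ for all $\alpha\in A_p$.
   Context: A function $g$ is $q$-monotone on an interval $J$, written $g\in\Delta^{(q)}(J)$, if all divided differences $[t_0,\dots,t_q;g]$ over $q+1$ distinct points of $J$ are nonnegative. With $y_0:=1$, $y_{s+1}:=-1$, $g\in\Delta^{(q)}(Y_s)$ iff $(-1)^ig\in\Delta^{(q)}([y_{i+1},y_i])$ for $0\le i\le s$; for $s=0$, $\Delta^{(q)}(Y_0)=\Delta^{(q)}([-1,1])$. *)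

theory Defs
  imports Complex_Main "HOL-Computational_Algebra.Polynomial"
begin

text \<open>Divided difference of g at the q+1 nodes t 0, ..., t q (Lagrange/explicit form,
  valid for distinct nodes).\<close>
definition divdiff :: "nat \<Rightarrow> (nat \<Rightarrow> real) \<Rightarrow> (real \<Rightarrow> real) \<Rightarrow> real" where
  "divdiff q t g = (\<Sum>j\<le>q. g (t j) / (\<Prod>k\<in>{..q} - {j}. (t j - t k)))"

definition qmono :: "nat \<Rightarrow> real set \<Rightarrow> (real \<Rightarrow> real) \<Rightarrow> bool" where
  "qmono q J g \<longleftrightarrow>
     (\<forall>t. inj_on t {..q} \<and> t ` {..q} \<subseteq> J \<longrightarrow> 0 \<le> divdiff q t g)"

definition yext :: "nat \<Rightarrow> (nat \<Rightarrow> real) \<Rightarrow> nat \<Rightarrow> real" where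
  "yext s y i = (if i = 0 then 1 else if i = s + 1 then -1 else y i)"

definition qmonoY :: "nat \<Rightarrow> nat \<Rightarrow> (nat \<Rightarrow> real) \<Rightarrow> (real \<Rightarrow> real) \<Rightarrow> bool" where
  "qmonoY q s y g \<longleftrightarrow>
     (\<forall>i\<le>s. qmono q {yext s y (i + 1) .. yext s y i} (\<lambda>x. (-1) ^ i * g x))"

end

theory Submission
  imports Defs "HOL-Computational_Algebra.Polynomial"
begin

lemma divdiff_single:
  assumes "j \<le> q" and "\<And>l. l \<le> q \<Longrightarrow> l \<noteq> j \<Longrightarrow> g (t l) = 0"
  shows "divdiff q t g = g (t j) / (\<Prod>k\<in>{..q} - {j}. (t j - t k))"
  unfolding divdiff_def
  by (rule sum.mono_neutral_cong_right[where S="{j}", simplified]) (use assms in auto)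

lemma zero_between:
  assumes qm: "qmono q J g" and q1: "1 \<le> q" and inj: "inj_on t {..q}" and tJ: "t ` {..q} \<subseteq> J"
    and z: "\<And>k. k \<le> q \<Longrightarrow> g (t k) = 0" and xJ: "x \<in> J"
    and x0: "t 0 < x" and xq: "x < t q"
  shows "g x = 0"
proof (cases "x \<in> t ` {..q}")
  case True then show ?thesis using z by auto
next
  case False
  define C where "C = (\<Prod>k\<in>{1..<q}. (x - t k))"
  have C0: "C \<noteq> 0" unfolding C_def using False by (auto simp: prod_zero_iff)
  have key: "0 \<le> g x / (\<Prod>k\<in>{..q} - {j}. (x - t k))" if j: "j \<le> q" for j
  proof -
    define u where "u = t(j := x)"
    have "inj_on u {..q}" using inj False j unfolding u_def inj_on_def by (auto split: if_splits)
    moreover have "u ` {..q} \<subseteq> J" using tJ xJ unfolding u_def by auto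
    ultimately have "0 \<le> divdiff q u g" using qm unfolding qmono_def by blast
    also have "divdiff q u g = g (u j) / (\<Prod>k\<in>{..q} - {j}. (u j - u k))"
      by (rule divdiff_single) (use j z in \<open>auto simp: u_def\<close>)
    also have "(\<Prod>k\<in>{..q} - {j}. (u j - u k)) = (\<Prod>k\<in>{..q} - {j}. (x - t k))"
      by (rule prod.cong) (auto simp: u_def)
    finally show ?thesis by (simp add: u_def)
  qed
  have s0: "{..q} - {0} = insert q {1..<q}" using q1 by auto
  have sq: "{..q} - {q} = insert 0 {1..<q}" using q1 by auto
  have p0: "(\<Prod>k\<in>{..q} - {0}. (x - t k)) = (x - t q) * C"
    unfolding s0 C_def by (subst prod.insert) auto
  have pq: "(\<Prod>k\<in>{..q} - {q}. (x - t k)) = (x - t 0) * C"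
    unfolding sq C_def using q1 by (subst prod.insert) auto
  have a: "0 \<le> g x / ((x - t q) * C)" using key[of 0] p0 by simp
  have b: "0 \<le> g x / ((x - t 0) * C)" using key[of q] pq by simp
  have a': "g x / C \<le> 0"
  proof -
    have "g x / ((x - t q) * C) = (g x / C) / (x - t q)" by simp
    show ?thesis
    proof (rule ccontr)
      assume "\<not> g x / C \<le> 0"
      then have "(g x / C) / (x - t q) < 0" using xq divide_pos_neg[of "g x / C" "x - t q"] by linarith
      then show False using a \<open>g x / ((x - t q) * C) = (g x / C) / (x - t q)\<close> by simp
    qed
  qed
  have b': "0 \<le> g x / C"
  proof -
    have e: "g x / C = ((g x / C) / (x - t 0)) * (x - t 0)" using x0 by simp
    have "0 \<le> (g x / C) / (x - t 0)" using b by (simp add: mult.commute)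
    then show ?thesis using e x0 by (metis mult_nonneg_nonneg less_eq_real_def diff_gt_0_iff_gt)
  qed
  from a' b' have "g x / C = 0" by linarith
  with C0 show ?thesis by simp
qed

lemma y_mono:
  fixes y :: "nat \<Rightarrow> real" and s i j :: nat
  assumes m: "\<And>i. 1 \<le> i \<Longrightarrow> i < s \<Longrightarrow> y (i + 1) < y i"
    and ij: "i \<le> j" and i1: "1 \<le> i" and js: "j \<le> s"
  shows "y j \<le> y i"
  using ij js
proof (induction j rule: dec_induct)
  case base then show ?case by simp
next
  case (step k)
  then have "y (k + 1) < y k" using m[of k] i1 by simp
  with step show ?case by simp
qed

theorem lemma1p1:
  fixes q s :: nat and y :: "nat \<Rightarrow> real"
  assumes "q \<ge> 1"
    and "s \<ge> 1 \<Longrightarrow> -1 < y s \<and> y 1 < 1"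
    and "\<And>i. 1 \<le> i \<Longrightarrow> i < s \<Longrightarrow> y (i + 1) < y i"
  shows "\<exists>(f :: real \<Rightarrow> real) (p :: nat) (\<alpha> :: nat \<Rightarrow> real).
           qmonoY q s y f \<and> p \<ge> q + 2 \<and>
           -1 \<le> \<alpha> p \<and> \<alpha> 1 \<le> 1 \<and> (\<forall>i. 1 \<le> i \<and> i < p \<longrightarrow> \<alpha> (i + 1) < \<alpha> i) \<and>
           (\<forall>i\<in>{1..p}. \<forall>j\<in>{1..s}. \<alpha> i \<noteq> y j) \<and>
           (\<forall>n::nat. \<not> (\<exists>P :: real poly. degree P \<le> n \<and> qmonoY q s y (poly P) \<and>
                          (\<forall>i\<in>{1..p}. poly P (\<alpha> i) = f (\<alpha> i))))"
proof -
  define b where "b = yext s y 1"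
  have ym: "\<And>i j. 1 \<le> i \<Longrightarrow> i \<le> j \<Longrightarrow> j \<le> s \<Longrightarrow> y j \<le> y i"
    using y_mono[of s y, OF assms(3)] by blast
  have b1: "-1 \<le> b \<and> b < 1"
  proof (cases "s = 0")
    case True then show ?thesis by (auto simp: b_def yext_def)
  next
    case False
    then have "-1 < y s" "y 1 < 1" "y s \<le> y 1" using assms(2) ym[of 1 s] by auto
    then show ?thesis using False by (auto simp: b_def yext_def)
  qed
  have yb: "\<And>j. j \<in> {1..s} \<Longrightarrow> y j \<le> b"
    using ym[of 1] by (auto simp: b_def yext_def)
  have ylt1: "\<And>i. 1 \<le> i \<Longrightarrow> i \<le> s \<Longrightarrow> yext s y i < 1"
    using yb b1 by (fastforce simp: yext_def)
  define p where "p = q + 2"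
  define d where "d = (1 - b) / real p"
  have d0: "0 < d" using b1 by (simp add: d_def p_def)
  define \<alpha> where "\<alpha> i = 1 - (real i - 1) * d" for i
  define f where "f x = (if x = (1::real) then 1 else (0::real))" for x
  have \<alpha>p: "b < \<alpha> p"
  proof -
    have "(real p - 1) * d < real p * d" using d0 by simp
    also have "real p * d = 1 - b" unfolding d_def p_def by simp
    finally show ?thesis unfolding \<alpha>_def by simp
  qed
  have \<alpha>dec: "\<And>i j. i < j \<Longrightarrow> \<alpha> j < \<alpha> i" unfolding \<alpha>_def using d0 by simp
  have \<alpha>ge: "\<And>i. i \<le> p \<Longrightarrow> \<alpha> p \<le> \<alpha> i" using \<alpha>dec by (metis le_less order_refl)
  have \<alpha>le1: "\<And>i. 1 \<le> i \<Longrightarrow> \<alpha> i \<le> 1" unfolding \<alpha>_def using d0 by simp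
  have \<alpha>ne1: "\<And>i. 2 \<le> i \<Longrightarrow> \<alpha> i \<noteq> 1" unfolding \<alpha>_def using d0 by simp
  have fmono: "qmonoY q s y f"
    unfolding qmonoY_def qmono_def
  proof (intro allI impI)
    fix i t assume i: "i \<le> s" and t: "inj_on t {..q} \<and> t ` {..q} \<subseteq> {yext s y (i + 1)..yext s y i}"
    show "0 \<le> divdiff q t (\<lambda>x. (- 1) ^ i * f x)" unfolding divdiff_def
    proof (rule sum_nonneg)
      fix l assume l: "l \<in> {..q}"
      show "0 \<le> (- 1) ^ i * f (t l) / (\<Prod>k\<in>{..q} - {l}. t l - t k)"
      proof (cases "t l = 1")
        case False then show ?thesis by (simp add: f_def)
      next
        case True
        have "t l \<le> yext s y i" using t l by auto
        then have i0: "i = 0" using ylt1[of i] i True by (cases "i = 0") auto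
        have "0 < (\<Prod>k\<in>{..q} - {l}. t l - t k)"
        proof (rule prod_pos)
          fix k assume k: "k \<in> {..q} - {l}"
          then have "t k \<noteq> t l" using t l unfolding inj_on_def by blast
          moreover have "t k \<le> 1" using t k i0 by (auto simp: yext_def)
          ultimately show "0 < t l - t k" using True by simp
        qed
        then show ?thesis using True i0 by (simp add: f_def)
      qed
    qed
  qed
  have noP: "\<not> (\<exists>P :: real poly. degree P \<le> n \<and> qmonoY q s y (poly P) \<and>
                          (\<forall>i\<in>{1..p}. poly P (\<alpha> i) = f (\<alpha> i)))" for n
  proof
    assume "\<exists>P :: real poly. degree P \<le> n \<and> qmonoY q s y (poly P) \<and>
                          (\<forall>i\<in>{1..p}. poly P (\<alpha> i) = f (\<alpha> i))"
    then obtain P :: "real poly" where Pm: "qmonoY q s y (poly P)"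
      and Pi: "\<forall>i\<in>{1..p}. poly P (\<alpha> i) = f (\<alpha> i)" by blast
    have qm: "qmono q {b..1} (poly P)"
      using Pm unfolding qmonoY_def by (auto simp: b_def yext_def elim!: allE[of _ 0])
    define t where "t k = \<alpha> (p - k)" for k
    have tz: "\<And>k. k \<le> q \<Longrightarrow> poly P (t k) = 0"
      using Pi \<alpha>ne1 by (auto simp: t_def p_def f_def)
    have tinj: "inj_on t {..q}" unfolding inj_on_def t_def p_def
      using \<alpha>dec by (metis diff_diff_cancel le_SucI le_add1 add_2_eq_Suc' atMost_iff linorder_neqE_nat order.strict_iff_not diff_le_mono2 nat_le_linear)
    have tJ: "t ` {..q} \<subseteq> {b..1}"
      using \<alpha>ge \<alpha>le1 \<alpha>p by (auto simp: t_def p_def intro!: less_imp_le[OF less_le_trans[OF \<alpha>p]])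
    have roots: "{t 0<..<t q} \<subseteq> {x. poly P x = 0}"
    proof
      fix x assume x: "x \<in> {t 0<..<t q}"
      have "x \<in> {b..1}" using x tJ by fastforce
      then show "x \<in> {x. poly P x = 0}"
        using zero_between[OF qm assms(1) tinj tJ tz] x by auto
    qed
    have "t 0 < t q" unfolding t_def p_def using \<alpha>dec[of 2 "q+2"] assms(1) by simp
    then have "infinite {x. poly P x = 0}" using roots infinite_Ioo finite_subset by blast
    then have "P = 0" using poly_roots_finite by blast
    moreover have "poly P (\<alpha> 1) = 1" using bspec[OF Pi, of 1] by (simp add: p_def f_def \<alpha>_def)
    ultimately show False by simp
  qed
  show ?thesis
  proof (intro exI conjI)
    show "qmonoY q s y f" by (rule fmono)
    show "q + 2 \<le> p" by (simp add: p_def)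
    show "-1 \<le> \<alpha> p" using \<alpha>p b1 by simp
    show "\<alpha> 1 \<le> 1" by (simp add: \<alpha>_def)
    show "\<forall>i. 1 \<le> i \<and> i < p \<longrightarrow> \<alpha> (i + 1) < \<alpha> i" using \<alpha>dec by simp
    show "\<forall>i\<in>{1..p}. \<forall>j\<in>{1..s}. \<alpha> i \<noteq> y j"
      using \<alpha>ge \<alpha>p yb by (metis atLeastAtMost_iff not_le order_trans less_le_trans order.strict_iff_not)
    show "\<forall>n. \<not> (\<exists>P :: real poly. degree P \<le> n \<and> qmonoY q s y (poly P) \<and>
                          (\<forall>i\<in>{1..p}. poly P (\<alpha> i) = f (\<alpha> i)))" using noP by blast
  qed
qed

end
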